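(* Let $s\ge0$ be a constant, let $K_s=\frac{1+\sqrt{2}}{3}-\frac{\sqrt{4+2\sqrt{2}}}{4}+\frac{2-\sqrt{2}}{6}s$ and $\epsilon_0=\frac{2-\sqrt2}{6}$. Let $(M,g)$ be a complete oriented four-dimensional Einstein manifold with nonnegative sectional curvature and $\mathrm{Ric}=g$, such that $K_{ik}+sK_{ij}\ge K_s$ for every orthonormal basis $\{e_i\}$ of every tangent space and all distinct $i,j,k$ with $K_{ik}\ge K_{ij}$. Fix $o\in M$ and a Berger basis at $o$ (see context), with $a_1,a_2,a_3,c_1,c_2,c_3,I$ defined from it as in the context, and suppose the minimal sectional curvature at $o$ satisfies $K_{12}\le \epsilon_0-\epsilon$ for a constant $\epsilon>0$. Then: (1) if $a_2\ge0$ and $c_2\ge0$, then $I>\frac83\epsilon$; (2) if $a_2<0$ or $c_2<0$, then $I>\epsilon$.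
   Context: Curvature conventions: $R_{ijkl}=R(e_i,e_j,e_k,e_l)$ with $K_{ij}=R_{ijij}$ the sectional curvature of the plane spanned by $e_i,e_j$. A Berger basis at $o$ is a positively oriented orthonormal basis $\{e_i\}$ of $T_oM$ such that: (1) $K_{12}=\min\{K(\pi):\pi\subset T_oM\}$; (2) $K_{14}=\max\{K(\pi):\pi\subset T_oM\}$; (3) $R_{ikjk}=0$ for all $i\ne j$; (4) $|R_{1342}-R_{1234}|\le K_{13}-K_{12}$, $|R_{1423}-R_{1342}|\le K_{14}-K_{13}$, $|R_{1423}-R_{1234}|\le K_{14}-K_{12}$ (such a basis exists at every point of an oriented Einstein four-manifold, by Berger). Define $a_1=2(K_{12}+R_{1234})$, $a_2=2(K_{13}+R_{1342})$, $a_3=2(K_{14}+R_{1423})$, $c_1=2(K_{12}-R_{1234})$, $c_2=2(K_{13}-R_{1342})$, $c_3=2(K_{14}-R_{1423})$; these are the eigenvalues of the curvature operator restricted to self-dual and anti-self-dual 2-forms respectively, with $a_1\le a_2\le a_3$ and $c_1\le c_2\le c_3$. Define $$I=(c_2-c_1)c_3+(c_3-c_1)c_2+(a_2-a_1)a_3+(a_3-a_1)a_2 .$$ *)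

theory Defs
  imports Complex_Main
begin

text \<open>Pointwise (algebraic) data at the point o of an oriented Riemannian 4-manifold.
  We work in the coordinates given by the Berger basis e_1,...,e_4 at o, so the tangent
  space T_oM is identified isometrically and orientation-preservingly with R^4,
  vectors being functions on the index set {1..4}. The curvature tensor at o is
  given by its components R i j k l = R(e_i,e_j,e_k,e_l).\<close>

definition idx :: "nat set" where "idx = {1..4}"

definition ip :: "(nat \<Rightarrow> real) \<Rightarrow> (nat \<Rightarrow> real) \<Rightarrow> real" where
  "ip u v = (\<Sum>i\<in>idx. u i * v i)"

definition Rf :: "(nat \<Rightarrow> nat \<Rightarrow> nat \<Rightarrow> nat \<Rightarrow> real) \<Rightarrow>
    (nat \<Rightarrow> real) \<Rightarrow> (nat \<Rightarrow> real) \<Rightarrow> (nat \<Rightarrow> real) \<Rightarrow> (nat \<Rightarrow> real) \<Rightarrow> real" where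
  "Rf R u v w z = (\<Sum>i\<in>idx. \<Sum>j\<in>idx. \<Sum>k\<in>idx. \<Sum>l\<in>idx. R i j k l * u i * v j * w k * z l)"

definition alg_curv_tensor :: "(nat \<Rightarrow> nat \<Rightarrow> nat \<Rightarrow> nat \<Rightarrow> real) \<Rightarrow> bool" where
  "alg_curv_tensor R \<longleftrightarrow> (\<forall>i\<in>idx. \<forall>j\<in>idx. \<forall>k\<in>idx. \<forall>l\<in>idx.
      R i j k l = - R j i k l \<and> R i j k l = - R i j l k \<and> R i j k l = R k l i j \<and>
      R i j k l + R j k i l + R k i j l = 0)"

definition einstein_ric_one :: "(nat \<Rightarrow> nat \<Rightarrow> nat \<Rightarrow> nat \<Rightarrow> real) \<Rightarrow> bool" where
  "einstein_ric_one R \<longleftrightarrow> (\<forall>i\<in>idx. \<forall>j\<in>idx.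
      (\<Sum>k\<in>idx. R i k j k) = (if i = j then 1 else 0))"

definition orthonormal_pair :: "(nat \<Rightarrow> real) \<Rightarrow> (nat \<Rightarrow> real) \<Rightarrow> bool" where
  "orthonormal_pair u v \<longleftrightarrow> ip u u = 1 \<and> ip v v = 1 \<and> ip u v = 0"

definition sec :: "(nat \<Rightarrow> nat \<Rightarrow> nat \<Rightarrow> nat \<Rightarrow> real) \<Rightarrow> (nat \<Rightarrow> real) \<Rightarrow> (nat \<Rightarrow> real) \<Rightarrow> real" where
  "sec R u v = Rf R u v u v"

definition orthonormal_basis :: "(nat \<Rightarrow> nat \<Rightarrow> real) \<Rightarrow> bool" where
  "orthonormal_basis f \<longleftrightarrow> (\<forall>i\<in>idx. \<forall>j\<in>idx. ip (f i) (f j) = (if i = j then 1 else 0))"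

definition nonneg_sec :: "(nat \<Rightarrow> nat \<Rightarrow> nat \<Rightarrow> nat \<Rightarrow> real) \<Rightarrow> bool" where
  "nonneg_sec R \<longleftrightarrow> (\<forall>u v. orthonormal_pair u v \<longrightarrow> sec R u v \<ge> 0)"

definition K_s :: "real \<Rightarrow> real" where
  "K_s s = (1 + sqrt 2) / 3 - sqrt (4 + 2 * sqrt 2) / 4 + (2 - sqrt 2) / 6 * s"

definition eps0 :: real where
  "eps0 = (2 - sqrt 2) / 6"

definition pinched :: "(nat \<Rightarrow> nat \<Rightarrow> nat \<Rightarrow> nat \<Rightarrow> real) \<Rightarrow> real \<Rightarrow> bool" where
  "pinched R s \<longleftrightarrow> (\<forall>f. orthonormal_basis f \<longrightarrow>
     (\<forall>i\<in>idx. \<forall>j\<in>idx. \<forall>k\<in>idx. i \<noteq> j \<and> j \<noteq> k \<and> i \<noteq> k \<and>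
        sec R (f i) (f k) \<ge> sec R (f i) (f j) \<longrightarrow>
        sec R (f i) (f k) + s * sec R (f i) (f j) \<ge> K_s s))"

definition Kc :: "(nat \<Rightarrow> nat \<Rightarrow> nat \<Rightarrow> nat \<Rightarrow> real) \<Rightarrow> nat \<Rightarrow> nat \<Rightarrow> real" where
  "Kc R i j = R i j i j"

definition berger_basis :: "(nat \<Rightarrow> nat \<Rightarrow> nat \<Rightarrow> nat \<Rightarrow> real) \<Rightarrow> bool" where
  "berger_basis R \<longleftrightarrow>
     (\<forall>u v. orthonormal_pair u v \<longrightarrow> Kc R 1 2 \<le> sec R u v) \<and>
     (\<forall>u v. orthonormal_pair u v \<longrightarrow> sec R u v \<le> Kc R 1 4) \<and>
     (\<forall>i\<in>idx. \<forall>j\<in>idx. \<forall>k\<in>idx. i \<noteq> j \<longrightarrow> R i k j k = 0) \<and>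
     \<bar>R 1 3 4 2 - R 1 2 3 4\<bar> \<le> Kc R 1 3 - Kc R 1 2 \<and>
     \<bar>R 1 4 2 3 - R 1 3 4 2\<bar> \<le> Kc R 1 4 - Kc R 1 3 \<and>
     \<bar>R 1 4 2 3 - R 1 2 3 4\<bar> \<le> Kc R 1 4 - Kc R 1 2"

definition a1 where "a1 R = 2 * (Kc R 1 2 + R 1 2 3 4)"
definition a2 where "a2 R = 2 * (Kc R 1 3 + R 1 3 4 2)"
definition a3 where "a3 R = 2 * (Kc R 1 4 + R 1 4 2 3)"
definition c1 where "c1 R = 2 * (Kc R 1 2 - R 1 2 3 4)"
definition c2 where "c2 R = 2 * (Kc R 1 3 - R 1 3 4 2)"
definition c3 where "c3 R = 2 * (Kc R 1 4 - R 1 4 2 3)"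

definition Iq :: "(nat \<Rightarrow> nat \<Rightarrow> nat \<Rightarrow> nat \<Rightarrow> real) \<Rightarrow> real" where
  "Iq R = (c2 R - c1 R) * c3 R + (c3 R - c1 R) * c2 R
        + (a2 R - a1 R) * a3 R + (a3 R - a1 R) * a2 R"

end

theory Submission
  imports Defs
begin

lemma core_c:
  fixes a1 a2 a3 c1 c2 c3 K :: real
  assumes sa: "a1 + a2 + a3 = 2" and sc: "c1 + c2 + c3 = 2"
    and o1: "a1 \<le> a2" and o2: "a2 \<le> a3" and o3: "c1 \<le> c2" and o4: "c2 \<le> c3"
    and c2n: "c2 \<le> 0" and hK: "a2 + c2 \<ge> K" and T0: "0 \<le> a1 + c1" and K0: "0 \<le> K" and K1: "K \<le> 1"
  shows "(c2-c1)*c3+(c3-c1)*c2+(a2-a1)*a3+(a3-a1)*a2 \<ge>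
     2*K^2 - (a1+c1)*(2-(a1+c1)) - 2/3*(2-(a1+c1)-2*K)^2"
proof -
  define T where "T = a1 + c1"
  define g1 where "g1 = c2 - c1"
  define g2 where "g2 = 2 - a1 - 2*K + 2*c2"
  have a3e: "a3 = 2 - a1 - a2" using sa by linarith
  have c3e: "c3 = 2 - c1 - c2" using sc by linarith
  have eq: "(c2-c1)*c3+(c3-c1)*c2+(a2-a1)*a3+(a3-a1)*a2 =
     (2*K^2 - (a1+c1)*(2-(a1+c1)) - 2/3*(2-(a1+c1)-2*K)^2)
     + 2*((a2-K+c2)*(a3-K+c2)) + ((8+2*T-8*K)*g1 + 4*(g1*g1) + 2*(g2*(2+K-a1-4*c2)))/3"
    unfolding a3e c3e T_def g1_def g2_def by (simp add: field_simps power2_eq_square)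
  have p1: "(a2-K+c2)*(a3-K+c2) \<ge> 0" using hK o2 by simp
  have p2: "(8+2*T-8*K)*g1 \<ge> 0" unfolding T_def g1_def using T0 K1 o3 by simp
  have p3: "g1*g1 \<ge> 0" by simp
  have "a1 \<le> 2/3" using o1 o2 sa by linarith
  hence p4: "g2*(2+K-a1-4*c2) \<ge> 0" unfolding g2_def using c2n K0 o2 hK a3e by simp
  have r: "0 \<le> 2*((a2-K+c2)*(a3-K+c2)) + ((8+2*T-8*K)*g1 + 4*(g1*g1) + 2*(g2*(2+K-a1-4*c2)))/3"
    using p1 p2 p3 p4 by simp
  show ?thesis unfolding eq using r by simp
qed


definition Gf :: "real \<Rightarrow> real \<Rightarrow> real" where
  "Gf T K = 2*K^2 - T*(2-T) - 2/3*(2-T-2*K)^2"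

lemma Gf_expand: "Gf T K = Gf T0 K + (2/3 + 2*T0/3 - 8*K/3)*(T-T0) + (T-T0)^2/3"
  unfolding Gf_def by (simp add: field_simps power2_eq_square)

lemma GT0_lem: fixes r q :: real assumes r2: "r*r = 2" and q2: "q*q = 4+2*r"
  shows "Gf (4*((2-r)/6)) (4*((1+r)/3 - q/4)) = 0"
proof -
  have "Gf (4*((2-r)/6)) (4*((1+r)/3 - q/4)) = 8*(1+2*r+r*r)/9 - 2*(q*q)/3 - 4*(2+r-r*r)/9"
    unfolding Gf_def power2_eq_square by (simp add: field_simps)
  also have "\<dots> = 0" using r2 q2 by (simp add: field_simps)
  finally show ?thesis .
qed

lemma core_1:
  fixes a1 a2 a3 c1 c2 c3 :: real
  assumes sa: "a1 + a2 + a3 = 2" and sc: "c1 + c2 + c3 = 2"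
    and o1: "a1 \<le> a2" and o2: "a2 \<le> a3" and o3: "c1 \<le> c2" and o4: "c2 \<le> c3"
    and p: "a2 \<ge> 0" "c2 \<ge> 0"
  shows "(c2-c1)*c3+(c3-c1)*c2+(a2-a1)*a3+(a3-a1)*a2 \<ge> 4/3*a2 + 4/3*c2 - 4/3*a1 - 4/3*c1"
proof -
  have a3e: "a3 = 2 - a1 - a2" using sa by linarith
  have c3e: "c3 = 2 - c1 - c2" using sc by linarith
  have eq: "(c2-c1)*c3+(c3-c1)*c2+(a2-a1)*a3+(a3-a1)*a2 =
    (2-a1)*(a2-a1) + (2-c1)*(c2-c1) + a2*(a3-a2) + c2*(c3-c2)"
    unfolding a3e c3e by (simp add: algebra_simps)
  have "a1 \<le> 2/3" using o1 o2 sa by linarith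
  hence q1: "(2-a1)*(a2-a1) \<ge> 4/3*(a2-a1)" using o1 by (intro mult_right_mono) auto
  have "c1 \<le> 2/3" using o3 o4 sc by linarith
  hence q2: "(2-c1)*(c2-c1) \<ge> 4/3*(c2-c1)" using o3 by (intro mult_right_mono) auto
  have q3: "a2*(a3-a2) \<ge> 0" "c2*(c3-c2) \<ge> 0" using p o2 o4 by auto
  have X: "(2-a1)*(a2-a1) + (2-c1)*(c2-c1) + a2*(a3-a2) + c2*(c3-c2) \<ge> 4/3*(a2-a1) + 4/3*(c2-c1) + 0 + 0"
    using add_mono[OF add_mono[OF add_mono[OF q1 q2] q3(1)] q3(2)] by simp
  have L: "4/3*(a2-a1) + 4/3*(c2-c1) + 0 + 0 = 4/3*a2 + 4/3*c2 - 4/3*a1 - 4/3*c1" by argo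
  from X show ?thesis unfolding eq L .
qed

definition ev :: "nat \<Rightarrow> nat \<Rightarrow> real" where "ev i = (\<lambda>j. if j = i then 1 else 0)"

lemma idx_eq: "idx = {1,2,3,4}" unfolding idx_def by auto

lemma ev_onb: "orthonormal_basis ev"
  unfolding orthonormal_basis_def ip_def idx_eq ev_def by auto

lemma sec12: "sec R (ev 1) (ev 2) = Kc R 1 2"
  unfolding sec_def Rf_def idx_eq ev_def Kc_def by simp

lemma sec13: "sec R (ev 1) (ev 3) = Kc R 1 3"
  unfolding sec_def Rf_def idx_eq ev_def Kc_def by simp

theorem lemma4p1:
  fixes R :: "nat \<Rightarrow> nat \<Rightarrow> nat \<Rightarrow> nat \<Rightarrow> real" and s \<epsilon> :: real
  assumes "s \<ge> 0"
    and "alg_curv_tensor R"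
    and "einstein_ric_one R"
    and "nonneg_sec R"
    and "pinched R s"
    and "berger_basis R"
    and "\<epsilon> > 0"
    and "Kc R 1 2 \<le> eps0 - \<epsilon>"
  shows "(a2 R \<ge> 0 \<and> c2 R \<ge> 0 \<longrightarrow> Iq R > 8 / 3 * \<epsilon>)
     \<and> (a2 R < 0 \<or> c2 R < 0 \<longrightarrow> Iq R > \<epsilon>)"
proof -
  note A = assms
  have acts: "\<And>i j k l. i\<in>idx \<Longrightarrow> j\<in>idx \<Longrightarrow> k\<in>idx \<Longrightarrow> l\<in>idx \<Longrightarrow>
      R i j k l = - R j i k l \<and> R i j k l = - R i j l k \<and> R i j k l = R k l i j \<and>
      R i j k l + R j k i l + R k i j l = 0"
    using A(2) unfolding alg_curv_tensor_def by blast
  have I1: "1 \<in> idx" "2 \<in> idx" "3 \<in> idx" "4 \<in> idx" by (auto simp: idx_eq)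
  have r1111: "R 1 1 1 1 = 0" using acts[OF I1(1) I1(1) I1(1) I1(1)] by linarith
  have "(\<Sum>k\<in>idx. R 1 k 1 k) = 1" using A(3) I1 unfolding einstein_ric_one_def by auto
  hence ein: "Kc R 1 2 + Kc R 1 3 + Kc R 1 4 = 1" using r1111 unfolding idx_eq Kc_def by simp
  have b1: "R 1 2 3 4 + R 2 3 1 4 + R 3 1 2 4 = 0" using acts[OF I1(1) I1(2) I1(3) I1(4)] by blast
  have b2: "R 2 3 1 4 = R 1 4 2 3" using acts[OF I1(2) I1(3) I1(1) I1(4)] by blast
  have b3: "R 3 1 2 4 = - R 1 3 2 4" using acts[OF I1(3) I1(1) I1(2) I1(4)] by blast
  have b4: "R 1 3 4 2 = - R 1 3 2 4" using acts[OF I1(1) I1(3) I1(4) I1(2)] by blast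
  have bian: "R 1 2 3 4 + R 1 3 4 2 + R 1 4 2 3 = 0" using b1 b2 b3 b4 by linarith
  have B: "\<bar>R 1 3 4 2 - R 1 2 3 4\<bar> \<le> Kc R 1 3 - Kc R 1 2"
          "\<bar>R 1 4 2 3 - R 1 3 4 2\<bar> \<le> Kc R 1 4 - Kc R 1 3"
    using A(6) unfolding berger_basis_def by auto
  have ob: "orthonormal_pair (ev 1) (ev 2)"
    unfolding orthonormal_pair_def ip_def idx_eq ev_def by simp
  have k12nn: "Kc R 1 2 \<ge> 0" using A(4) ob sec12[of R] unfolding nonneg_sec_def by metis
  define r where "r = sqrt 2"
  define q where "q = sqrt (4 + 2 * r)"
  have r2: "r * r = 2" unfolding r_def by simp
  have rl: "r > 141/100" unfolding r_def by (rule real_less_rsqrt) (simp add: power2_eq_square)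
  have ru: "r < 142/100" unfolding r_def by (rule real_less_lsqrt) (simp_all add: power2_eq_square)
  have q2: "q * q = 4 + 2*r" unfolding q_def using rl by simp
  have ql: "q > 26/10" unfolding q_def by (rule real_less_rsqrt) (use rl in \<open>simp add: power2_eq_square\<close>)
  have qu: "q < 262/100" unfolding q_def by (rule real_less_lsqrt) (use ru in \<open>simp_all add: power2_eq_square\<close>)
  define KK where "KK = 4*((1+r)/3 - q/4)"
  have Ks: "K_s s = KK/4 + eps0 * s" unfolding K_s_def KK_def eps0_def r_def q_def by (simp add: field_simps)
  have e0: "eps0 = (2 - r)/6" unfolding eps0_def r_def ..
  have k13k12: "Kc R 1 3 \<ge> Kc R 1 2" using B(1) by linarith
  have "\<forall>i\<in>idx. \<forall>j\<in>idx. \<forall>k\<in>idx. i \<noteq> j \<and> j \<noteq> k \<and> i \<noteq> k \<and>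
        sec R (ev i) (ev k) \<ge> sec R (ev i) (ev j) \<longrightarrow>
        sec R (ev i) (ev k) + s * sec R (ev i) (ev j) \<ge> K_s s"
    using A(5) ev_onb unfolding pinched_def by blast
  from this[THEN bspec, OF I1(1), THEN bspec, OF I1(2), THEN bspec, OF I1(3)]
  have "sec R (ev 1) (ev 3) \<ge> sec R (ev 1) (ev 2) \<longrightarrow>
        sec R (ev 1) (ev 3) + s * sec R (ev 1) (ev 2) \<ge> K_s s" by simp
  hence "sec R (ev 1) (ev 3) + s * sec R (ev 1) (ev 2) \<ge> K_s s"
    using k13k12 unfolding sec12 sec13 by blast
  hence pin: "Kc R 1 3 + s * Kc R 1 2 \<ge> KK/4 + eps0 * s" unfolding sec12 sec13 Ks .
  have "s * Kc R 1 2 \<le> s * eps0" using A(1) A(7) A(8) by (intro mult_left_mono) auto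
  hence k13: "4 * Kc R 1 3 \<ge> KK" using pin by (simp add: algebra_simps)
  have sa: "a1 R + a2 R + a3 R = 2"
  proof -
    have "a1 R + a2 R + a3 R = 2*(Kc R 1 2 + Kc R 1 3 + Kc R 1 4) + 2*(R 1 2 3 4 + R 1 3 4 2 + R 1 4 2 3)"
      unfolding a1_def a2_def a3_def by (simp add: algebra_simps)
    thus ?thesis using ein bian by simp
  qed
  have sc: "c1 R + c2 R + c3 R = 2"
  proof -
    have "c1 R + c2 R + c3 R = 2*(Kc R 1 2 + Kc R 1 3 + Kc R 1 4) - 2*(R 1 2 3 4 + R 1 3 4 2 + R 1 4 2 3)"
      unfolding c1_def c2_def c3_def by (simp add: algebra_simps)
    thus ?thesis using ein bian by simp
  qed
  have o: "a1 R \<le> a2 R" "a2 R \<le> a3 R" "c1 R \<le> c2 R" "c2 R \<le> c3 R"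
    unfolding a1_def a2_def a3_def c1_def c2_def c3_def using B by auto
  have h2: "a2 R + c2 R \<ge> KK" unfolding a2_def c2_def using k13 by (simp add: algebra_simps)
  have h1: "a1 R + c1 R = 4 * Kc R 1 2" unfolding a1_def c1_def by (simp add: algebra_simps)
  have Iq_eq: "Iq R = (c2 R - c1 R) * c3 R + (c3 R - c1 R) * c2 R + (a2 R - a1 R) * a3 R + (a3 R - a1 R) * a2 R"
    unfolding Iq_def ..
  have KKf: "KK = 4/3 + 4/3*r - q" unfolding KK_def by (simp add: field_simps)
  have KKl: "KK > 59/100" using KKf rl qu by linarith
  have KKu: "KK < 1" using KKf ru ql by linarith
  have e0f: "eps0 = 1/3 - r/6" unfolding e0 by (simp add: field_simps)
  define T0 where "T0 = 4 * eps0"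
  have GT0: "Gf T0 KK = 0"
    unfolding T0_def e0 KK_def by (rule GT0_lem[OF r2 q2])
  have T0f: "T0 = 4/3 - 2/3*r" unfolding T0_def e0f by (simp add: field_simps)
  have dneg: "2/3 + 2*T0/3 - 8*KK/3 < - 1/4" using T0f rl KKl by linarith
  have Tle: "T0 - 4 * Kc R 1 2 \<ge> 4 * \<epsilon>" using T0_def A(8) by linarith
  have G: "Gf (4 * Kc R 1 2) KK > \<epsilon>"
  proof -
    define X where "X = 4 * Kc R 1 2 - T0"
    define D where "D = 2/3 + 2*T0/3 - 8*KK/3"
    have X: "X \<le> - 4 * \<epsilon>" unfolding X_def using Tle by linarith
    have "Gf (4 * Kc R 1 2) KK \<ge> D * X"
      using Gf_expand[of "4 * Kc R 1 2" KK T0] GT0 unfolding D_def X_def by simp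
    moreover have "D * X > (-1/4) * X"
      using dneg X A(7) unfolding D_def by (intro mult_strict_right_mono_neg) auto
    ultimately show ?thesis using X A(7) by linarith
  qed
  have KKe: "KK/4 > eps0" using e0f KKl rl by linarith
  show ?thesis
  proof (intro conjI impI)
    assume "a2 R \<ge> 0 \<and> c2 R \<ge> 0"
    hence "Iq R \<ge> 4/3*a2 R + 4/3*c2 R - 4/3*a1 R - 4/3*c1 R"
      unfolding Iq_eq using core_1[OF sa sc o] by auto
    thus "Iq R > 8 / 3 * \<epsilon>" using h1 h2 KKe A(8) A(7) by linarith
  next
    assume "a2 R < 0 \<or> c2 R < 0"
    thus "Iq R > \<epsilon>"
    proof
      assume "c2 R < 0"
      hence "Iq R \<ge> Gf (a1 R + c1 R) KK" unfolding Iq_eq Gf_def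
        using core_c[OF sa sc o, of KK] h2 h1 k12nn KKl KKu by auto
      thus ?thesis using G h1 by simp
    next
      assume "a2 R < 0"
      hence "Iq R \<ge> Gf (c1 R + a1 R) KK" unfolding Iq_eq Gf_def
        using core_c[OF sc sa o(3) o(4) o(1) o(2), of KK] h2 h1 k12nn KKl KKu by (auto simp: algebra_simps)
      thus ?thesis using G h1 by (simp add: add.commute)
    qed
  qed
qed

end
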